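(* Let $P$ and $Q$ be two probability distributions on a finite set $\mathcal{A}$ that are positive on $\mathcal{A}$. Then $$\min_{x\in\mathcal{A}}\frac{P(x)}{Q(x)}\cdot\chi^2(Q,P)\;\le\;\frac{\chi^2(P,Q)}{1+\chi^2(P,Q)}\;\le\;\max_{x\in\mathcal{A}}\frac{P(x)}{Q(x)}\cdot\chi^2(Q,P).$$
   Context: For positive probability distributions $P,Q$ on a finite set $\mathcal{A}$, the chi-squared divergence is $\chi^2(P,Q)=\sum_{x\in\mathcal{A}}\frac{(P(x)-Q(x))^2}{Q(x)}$; thus $\chi^2(Q,P)=\sum_{x\in\mathcal{A}}\frac{(Q(x)-P(x))^2}{P(x)}$. *)

theory Defs
  imports Complex_Main
begin

definition chi2 :: "'a set \<Rightarrow> ('a \<Rightarrow> real) \<Rightarrow> ('a \<Rightarrow> real) \<Rightarrow> real" where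
  "chi2 A P Q = (\<Sum>x\<in>A. (P x - Q x)^2 / Q x)"

end

theory Submission
  imports Defs
begin

theorem corollary2:
  fixes A :: "'a set" and P Q :: "'a \<Rightarrow> real"
  assumes "finite A" and "A \<noteq> {}"
    and "\<And>x. x \<in> A \<Longrightarrow> P x > 0" and "\<And>x. x \<in> A \<Longrightarrow> Q x > 0"
    and "(\<Sum>x\<in>A. P x) = 1" and "(\<Sum>x\<in>A. Q x) = 1"
  shows "(MIN x\<in>A. P x / Q x) * chi2 A Q P \<le> chi2 A P Q / (1 + chi2 A P Q)
       \<and> chi2 A P Q / (1 + chi2 A P Q) \<le> (MAX x\<in>A. P x / Q x) * chi2 A Q P"
proof -
  note fin = assms(1) and ne = assms(2) and Pp = assms(3) and Qp = assms(4)
  have Pnz: "\<And>x. x \<in> A \<Longrightarrow> P x \<noteq> 0" using Pp by (metis less_irrefl)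
  have Qnz: "\<And>x. x \<in> A \<Longrightarrow> Q x \<noteq> 0" using Qp by (metis less_irrefl)
  define a where "a = chi2 A P Q"
  define b where "b = chi2 A Q P"
  define m where "m = (MIN x\<in>A. P x / Q x)"
  define M where "M = (MAX x\<in>A. P x / Q x)"
  have mle: "m \<le> P x / Q x" if "x \<in> A" for x
    unfolding m_def using fin that by (intro Min_le) auto
  have Mge: "P x / Q x \<le> M" if "x \<in> A" for x
    unfolding M_def using fin that by (intro Max_ge) auto
  have mpos: "m > 0"
  proof -
    have "m \<in> (\<lambda>x. P x / Q x) ` A" unfolding m_def using fin ne by (intro Min_in) auto
    then show ?thesis using Pp Qp by auto
  qed
  have a0: "a \<ge> 0" unfolding a_def chi2_def using Qp by (intro sum_nonneg) (simp add: less_imp_le)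
  have b0: "b \<ge> 0" unfolding b_def chi2_def using Pp by (intro sum_nonneg) (simp add: less_imp_le)
  have aMb: "a \<le> M * b"
  proof -
    have "a = (\<Sum>x\<in>A. (P x / Q x) * ((Q x - P x)^2 / P x))"
      unfolding a_def chi2_def
      using Pp Qp by (intro sum.cong) (auto simp: field_simps power2_eq_square Pnz Qnz)
    also have "\<dots> \<le> (\<Sum>x\<in>A. M * ((Q x - P x)^2 / P x))"
      using Pp Mge by (intro sum_mono mult_right_mono) (auto simp: less_imp_le)
    also have "\<dots> = M * b" unfolding b_def chi2_def by (simp add: sum_distrib_left)
    finally show ?thesis .
  qed
  have up: "a / (1 + a) \<le> M * b"
  proof -
    have "a / (1 + a) \<le> a" using a0 by (simp add: field_simps)
    then show ?thesis using aMb by linarith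
  qed
  define h where "h x = (P x - Q x) / P x + b" for x
  define G where "G = (\<Sum>x\<in>A. Q x * ((P x - Q x) / P x)^2)"
  have F2: "(\<Sum>x\<in>A. Q x * ((P x - Q x) / P x)) = - b"
  proof -
    have "(\<Sum>x\<in>A. Q x * ((P x - Q x) / P x)) = (\<Sum>x\<in>A. P x - Q x - (Q x - P x)^2 / P x)"
      using Pp by (intro sum.cong) (auto simp: field_simps power2_eq_square Pnz Qnz)
    also have "\<dots> = - b" unfolding b_def chi2_def
      by (simp add: sum_subtractf assms(5,6))
    finally show ?thesis .
  qed
  have F3: "(\<Sum>x\<in>A. Q x * h x * (P x / Q x - 1)) = b"
  proof -
    have "(\<Sum>x\<in>A. Q x * h x * (P x / Q x - 1)) = (\<Sum>x\<in>A. (Q x - P x)^2 / P x + b * (P x - Q x))"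
      unfolding h_def using Pp Qp by (intro sum.cong) (auto simp: field_simps power2_eq_square Pnz Qnz)
    also have "\<dots> = b" unfolding b_def chi2_def
      by (simp add: sum.distrib sum_distrib_left[symmetric] sum_subtractf assms(5,6))
    finally show ?thesis .
  qed
  have F4: "(\<Sum>x\<in>A. Q x * (P x / Q x - 1)^2) = a"
    unfolding a_def chi2_def using Qp
    by (intro sum.cong) (auto simp: field_simps power2_eq_square Pnz Qnz)
  have F5: "(\<Sum>x\<in>A. Q x * (h x)^2) = G - b^2"
  proof -
    have "(\<Sum>x\<in>A. Q x * (h x)^2) = (\<Sum>x\<in>A. Q x * ((P x - Q x) / P x)^2
           + 2 * b * (Q x * ((P x - Q x) / P x)) + b^2 * Q x)"
      unfolding h_def by (intro sum.cong) (auto simp: algebra_simps power2_eq_square)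
    also have "\<dots> = G + 2 * b * (\<Sum>x\<in>A. Q x * ((P x - Q x) / P x)) + b^2 * (\<Sum>x\<in>A. Q x)"
      unfolding G_def by (simp only: sum.distrib sum_distrib_left)
    also have "\<dots> = G + 2 * b * (- b) + b^2"
      by (simp only: F2 assms(6) mult_1_right)
    finally show ?thesis by (simp add: power2_eq_square)
  qed
  have F6: "m * G \<le> b"
  proof -
    have "m * G = (\<Sum>x\<in>A. (m * (Q x / P x)) * ((Q x - P x)^2 / P x))"
      unfolding G_def sum_distrib_left
      using Pp by (intro sum.cong) (auto simp: field_simps power2_eq_square Pnz Qnz)
    also have "\<dots> \<le> (\<Sum>x\<in>A. 1 * ((Q x - P x)^2 / P x))"
    proof (intro sum_mono mult_right_mono)
      fix x assume x: "x \<in> A"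
      have "m * Q x \<le> P x" using mle[OF x] Qp[OF x] by (simp add: field_simps)
      then show "m * (Q x / P x) \<le> 1" using Pp[OF x] by (simp add: field_simps)
      show "0 \<le> (Q x - P x)^2 / P x" using Pp[OF x] by simp
    qed
    also have "\<dots> = b" unfolding b_def chi2_def by simp
    finally show ?thesis .
  qed
  have F7: "0 \<le> G - b^2 - 2 * t * b + t^2 * a" for t
  proof -
    have "0 \<le> (\<Sum>x\<in>A. Q x * (h x - t * (P x / Q x - 1))^2)"
      using Qp by (intro sum_nonneg mult_nonneg_nonneg) (auto simp: less_imp_le)
    also have "\<dots> = (\<Sum>x\<in>A. Q x * (h x)^2 - 2 * t * (Q x * h x * (P x / Q x - 1))
                   + t^2 * (Q x * (P x / Q x - 1)^2))"
      by (intro sum.cong refl) (simp add: power2_eq_square field_simps Qnz)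
    also have "\<dots> = G - b^2 - 2 * t * b + t^2 * a"
      by (simp add: sum.distrib sum_subtractf sum_distrib_left[symmetric] F3 F4 F5)
    finally show ?thesis .
  qed
  have low: "m * b \<le> a / (1 + a)"
  proof (cases "a = 0")
    case True
    have "G - b^2 \<ge> 0" using F7[of 0] by simp
    have "(\<Sum>x\<in>A. (P x - Q x)^2 / Q x) = 0" using True unfolding a_def chi2_def .
    then have "\<forall>x\<in>A. (P x - Q x)^2 / Q x = 0"
      using fin Qp by (subst sum_nonneg_eq_0_iff[symmetric]) (auto simp: less_imp_le)
    then have "\<forall>x\<in>A. P x = Q x" using Qnz by auto
    then have "b = 0" unfolding b_def chi2_def by simp
    then show ?thesis using True by simp
  next
    case False
    then have apos: "a > 0" using a0 by simp
    have "0 \<le> G - b^2 - 2 * (b/a) * b + (b/a)^2 * a" by (rule F7)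
    then have "b^2 / a \<le> G - b^2" using apos by (simp add: field_simps power2_eq_square Pnz Qnz)
    then have "m * (b^2 / a) \<le> m * G - m * b^2" using mpos
      by (metis mult_left_mono less_imp_le right_diff_distrib)
    then have "m * (b^2 / a) \<le> b - m * b^2" using F6 by linarith
    then have "m * b^2 \<le> a * b - a * m * b^2" using apos by (simp add: field_simps)
    then have key: "b * (m * b * (1 + a)) \<le> b * a" by (simp add: algebra_simps power2_eq_square)
    show ?thesis
    proof (cases "b = 0")
      case True then show ?thesis using a0 by simp
    next
      case False
      then have "m * b * (1 + a) \<le> a" using key b0 by (simp add: mult_le_cancel_left)
      then show ?thesis using a0 by (simp add: field_simps)
    qed
  qed
  show ?thesis using low up unfolding a_def b_def m_def M_def by simp
qed

end
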